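(* Let $N\ge1$, $m_c>0$, $0<m\le 1$, $k=Tr^{\alpha}>0$, $\lambda_1,\dots,\lambda_N>0$, $\mathbf{D}=\mathrm{diag}(\lambda_1,\dots,\lambda_N)$, $\mathbf{C}$ an $N\times N$ symmetric positive definite matrix with unit diagonal, and $\hat\lambda_1,\dots,\hat\lambda_N$ the eigenvalues of $\mathbf{D}\mathbf{C}$. Define $$C_p=\frac{\Gamma(Nm_c+m)}{\Gamma(Nm_c+1)\Gamma(m)}\prod_{i=1}^{N}\left(\frac{1}{km\lambda_i+1}\right)^{m_c} F_D^{(N)}\!\left[1-m,m_c,\dots,m_c;Nm_c+1;\tfrac{1}{km\lambda_1+1},\dots,\tfrac{1}{km\lambda_N+1}\right]$$ and $\hat C_p$ by the same formula with every $\lambda_i$ replaced by $\hat\lambda_i$. Then $\hat C_p\ge C_p$; that is, when the user's Nakagami shape parameter satisfies $m\le1$, the coverage probability with correlated interferers is at least that with independent interferers.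
   Context: $F_D^{(N)}$ is Lauricella's fourth hypergeometric function: $F_D^{(N)}[a,b_1,\dots,b_N;c;x_1,\dots,x_N]=\sum_{i_1,\dots,i_N\ge0}\frac{(a)_{i_1+\dots+i_N}(b_1)_{i_1}\cdots(b_N)_{i_N}}{(c)_{i_1+\dots+i_N}}\frac{x_1^{i_1}}{i_1!}\cdots\frac{x_N^{i_N}}{i_N!}$ for $\max|x_j|<1$, with $(a)_n=\Gamma(a+n)/\Gamma(a)$. Interpretation: $C_p=P(g\ge k I)$ where $g\sim$ Gamma with shape $m$ and scale $1/m$ (user's Nakagami-$m$ channel power), $I=\sum_i\lambda_iG_i$ with $G_i$ i.i.d. Gamma$(m_c,1)$ independent of $g$, and $\hat C_p$ is the same with $\hat\lambda_i$ (correlated interferers); $\lambda_i=d_i^{-\alpha}/m_c$ and $\mathbf{C}$ has off-diagonal entries $\sqrt{\rho_{ij}}$, $\rho_{ij}\in[0,1]$. *)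

theory Defs
  imports "HOL-Analysis.Analysis"
begin

text \<open>Lauricella's fourth hypergeometric function F_D^(N), with N = CARD('n):
  the (absolutely convergent, for max |x_j| < 1) sum over all multi-indices i.\<close>
definition lauricella_FD :: "real \<Rightarrow> ('n::finite \<Rightarrow> real) \<Rightarrow> real \<Rightarrow> ('n \<Rightarrow> real) \<Rightarrow> real" where
  "lauricella_FD a b c x =
     (\<Sum>\<^sub>\<infinity> i \<in> (UNIV :: ('n \<Rightarrow> nat) set).
        pochhammer a (\<Sum>j\<in>UNIV. i j) / pochhammer c (\<Sum>j\<in>UNIV. i j)
        * (\<Prod>j\<in>UNIV. pochhammer (b j) (i j) * x j ^ i j / fact (i j)))"

definition coverage :: "real \<Rightarrow> real \<Rightarrow> real \<Rightarrow> real^'n::finite \<Rightarrow> real" where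
  "coverage mc m k lam =
     Gamma (real CARD('n) * mc + m) / (Gamma (real CARD('n) * mc + 1) * Gamma m)
     * (\<Prod>i\<in>UNIV. (1 / (k * m * lam$i + 1)) powr mc)
     * lauricella_FD (1 - m) (\<lambda>_. mc) (real CARD('n) * mc + 1)
         (\<lambda>i. 1 / (k * m * lam$i + 1))"

definition diag_mat :: "real^'n \<Rightarrow> real^'n^'n" where
  "diag_mat lam = (\<chi> i j. if i = j then lam$i else 0)"

end

theory Submission
  imports Defs
begin


definition pdm :: "real^'n::finite^'n \<Rightarrow> bool" where
  "pdm M \<longleftrightarrow> (\<forall>x. x \<noteq> 0 \<longrightarrow> x \<bullet> (M *v x) > 0)"

definition padm :: "real^'n::finite^'n \<Rightarrow> 'n set \<Rightarrow> real^'n^'n" where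
  "padm M S = (\<chi> i j. if i \<in> S \<and> j \<in> S then M$i$j else (if i = j then 1 else 0))"

lemma quad_eq: "x \<bullet> (M *v x) = (\<Sum>i\<in>UNIV. \<Sum>j\<in>UNIV. x$i * M$i$j * x$j)"
  by (simp add: inner_vec_def matrix_vector_mult_def sum_distrib_left mult_ac)

lemma pdm_det_nz: assumes "pdm M" shows "det M \<noteq> 0"
proof -
  have "\<forall>x. M *v x = 0 \<longrightarrow> x = 0"
    using assms unfolding pdm_def by (metis inner_zero_right less_irrefl)
  then have "invertible M"
    using matrix_left_invertible_ker invertible_left_inverse by blast
  then show ?thesis using invertible_det_nz by blast
qed

lemma pdm_nonneg: assumes "pdm M" shows "x \<bullet> (M *v x) \<ge> 0"
  using assms unfolding pdm_def
  by (cases "x = 0") (auto intro: less_imp_le)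

lemma padm_pdm: fixes M :: "real^'n::finite^'n" and S :: "'n set" assumes "pdm M" shows "pdm (padm M S)"
  unfolding pdm_def
proof (intro allI impI)
  fix x :: "real^'n" assume x: "x \<noteq> 0"
  define y where "y = (\<chi> i. if i \<in> S then x$i else 0)"
  have row: "(\<Sum>j\<in>UNIV. x$i * padm M S$i$j * x$j) =
      (\<Sum>j\<in>UNIV. y$i * M$i$j * y$j) + (if i \<in> S then 0 else x$i^2)" for i
  proof (cases "i \<in> S")
    case True
    then show ?thesis by (auto intro!: sum.cong simp: padm_def y_def)
  next
    case False
    then have "(\<Sum>j\<in>UNIV. x$i * padm M S$i$j * x$j) = (\<Sum>j\<in>UNIV. if j = i then x$i*x$i else 0)"
      by (intro sum.cong) (auto simp: padm_def)
    then show ?thesis using False by (simp add: y_def power2_eq_square)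
  qed
  have eq: "x \<bullet> (padm M S *v x) = y \<bullet> (M *v y) + (\<Sum>i\<in>UNIV. if i \<in> S then 0 else x$i^2)"
    unfolding quad_eq[of x] quad_eq[of y] by (simp add: row sum.distrib)
  have s0: "(\<Sum>i\<in>UNIV. if i \<in> S then 0 else x$i^2) \<ge> 0" by (intro sum_nonneg) auto
  show "x \<bullet> (padm M S *v x) > 0"
  proof (cases "y = 0")
    case False
    then have "y \<bullet> (M *v y) > 0" using assms unfolding pdm_def by blast
    then show ?thesis using eq s0 by linarith
  next
    case True
    from x obtain i where xi: "x$i \<noteq> 0" by (metis vec_eq_iff zero_index)
    then have iS: "i \<notin> S" using True by (auto simp: y_def vec_eq_iff split: if_splits)
    have "(\<Sum>i\<in>UNIV. if i \<in> S then 0 else x$i^2) > 0"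
      by (rule sum_pos2[where i=i]) (use xi iS in auto)
    then show ?thesis using eq True by simp
  qed
qed

lemma det_row_unit:
  fixes A :: "real^'n::finite^'n"
  assumes "\<And>j. A$k$j = (if j = k then 1 else 0)"
  shows "det A = det (\<chi> i j. if j = k then (if i = k then 1 else 0) else A$i$j)"
  unfolding det_def
proof (rule sum.cong[OF refl])
  fix p assume "p \<in> {p. p permutes (UNIV::'n set)}"
  then have p: "p permutes (UNIV::'n set)" by simp
  let ?B = "(\<chi> i j. if j = k then (if i = k then 1 else 0) else A$i$j) :: real^'n^'n"
  show "of_int (sign p) * (\<Prod>i\<in>UNIV. A $ i $ p i) = of_int (sign p) * (\<Prod>i\<in>UNIV. ?B $ i $ p i)"
  proof (cases "p k = k")
    case True
    have "A $ i $ p i = ?B $ i $ p i" for i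
    proof (cases "i = k")
      case False
      then have "p i \<noteq> k" using True permutes_inj[OF p] by (metis injD)
      then show ?thesis by simp
    qed (use True assms in simp)
    then show ?thesis by simp
  next
    case False
    have "A$k$p k = 0" "?B$k$p k = 0" using False assms by auto
    then have z: "(\<Prod>i\<in>UNIV. A $ i $ p i) = 0" "(\<Prod>i\<in>UNIV. ?B $ i $ p i) = 0"
      by (meson UNIV_I finite prod_zero)+
    show ?thesis unfolding z by simp
  qed
qed

lemma had_step:
  fixes M :: "real^'n::finite^'n" and S :: "'n set"
  assumes sym: "\<And>i j. M$i$j = M$j$i" and pd: "pdm M" and kS: "k \<notin> S"
  shows "\<exists>d. 0 < d \<and> d \<le> M$k$k \<and> det (padm M (insert k S)) = d * det (padm M S)"
proof -
  define B where "B = padm M S"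
  have "pdm B" unfolding B_def by (rule padm_pdm[OF pd])
  then have "invertible B" using pdm_det_nz invertible_det_nz by blast
  then obtain Bi where Bi: "B ** Bi = mat 1" unfolding invertible_def by blast
  define bv where "bv = (\<chi> j. if j \<in> S then M$j$k else 0)"
  define v where "v = Bi *v bv"
  have Bv: "B *v v = bv" unfolding v_def
    by (simp add: matrix_vector_mul_assoc Bi)
  have vout: "v$j = 0" if "j \<notin> S" for j
  proof -
    have "(B *v v)$j = (\<Sum>l\<in>UNIV. (if l = j then 1 else 0) * v$l)"
      unfolding matrix_vector_mult_def using that by (auto simp: B_def padm_def intro!: sum.cong)
    also have "\<dots> = v$j" by (simp add: if_distrib[where f="\<lambda>c. c * _"] cong: if_cong)
    finally show ?thesis using Bv that by (simp add: bv_def)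
  qed
  have vin: "(\<Sum>l\<in>S. M$j$l * v$l) = M$j$k" if "j \<in> S" for j
  proof -
    have "(B *v v)$j = (\<Sum>l\<in>UNIV. if l \<in> S then M$j$l * v$l else 0)"
      unfolding matrix_vector_mult_def using that by (auto simp: B_def padm_def intro!: sum.cong)
    also have "\<dots> = (\<Sum>l\<in>S. M$j$l * v$l)" by (simp add: sum.If_cases)
    finally show ?thesis using Bv that by (simp add: bv_def)
  qed
  have Mv: "(M *v v)$j = (\<Sum>l\<in>S. M$j$l * v$l)" for j
  proof -
    have "(M *v v)$j = (\<Sum>l\<in>UNIV. if l \<in> S then M$j$l * v$l else 0)"
      unfolding matrix_vector_mult_def using vout by (auto intro!: sum.cong)
    also have "\<dots> = (\<Sum>l\<in>S. M$j$l * v$l)" by (simp add: sum.If_cases)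
    finally show ?thesis .
  qed
  define A where "A = padm M (insert k S)"
  define x where "x = - (\<Sum>j\<in>S. v$j *s row j A)"
  have xspan: "x \<in> vec.span {row j A |j. j \<noteq> k}"
    unfolding x_def using kS
    by (intro vec.span_neg vec.span_sum vec.span_scale vec.span_base) auto
  have d1: "det (\<chi> i. if i = k then row k A + x else row i A) = det A"
    by (rule det_row_span[OF xspan])
  define d where "d = M$k$k - (\<Sum>j\<in>S. v$j * M$j$k)"
  have rowk: "row k A + x = d *s axis k 1"
  proof (rule iffD2[OF vec_eq_iff], intro allI)
    fix l
    have xl: "x$l = - (\<Sum>j\<in>S. v$j * A$j$l)"
      by (simp add: x_def row_def sum_component)
    show "(row k A + x)$l = (d *s axis k 1)$l"
    proof (cases "l = k")
      case True
      have "(\<Sum>j\<in>S. v$j * A$j$l) = (\<Sum>j\<in>S. v$j * M$j$k)"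
        using True by (intro sum.cong) (auto simp: A_def padm_def)
      then show ?thesis using True xl by (simp add: row_def A_def padm_def d_def axis_def)
    next
      case lk: False
      show ?thesis
      proof (cases "l \<in> S")
        case True
        have "(\<Sum>j\<in>S. v$j * A$j$l) = (\<Sum>j\<in>S. M$l$j * v$j)"
          using True by (intro sum.cong) (auto simp: A_def padm_def sym)
        also have "\<dots> = M$k$l" using vin[OF True] sym by simp
        finally show ?thesis using True lk xl by (simp add: row_def A_def padm_def axis_def)
      next
        case False
        have "(\<Sum>j\<in>S. v$j * A$j$l) = 0"
          using False lk by (intro sum.neutral) (auto simp: A_def padm_def)
        then show ?thesis using False lk xl by (simp add: row_def A_def padm_def axis_def)
      qed
    qed
  qed
  define E where "E = (\<chi> i. if i = k then axis k 1 else row i A)"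
  have d2: "det (\<chi> i. if i = k then d *s axis k (1::real) else row i A) = d * det E"
    unfolding E_def by (rule det_row_mul)
  have d3: "det E = det (\<chi> i j. if j = k then (if i = k then 1 else 0) else E$i$j)"
    by (rule det_row_unit) (simp add: E_def axis_def)
  have d4: "(\<chi> i j. if j = k then (if i = k then 1 else 0) else E$i$j) = B"
    using kS by (auto simp: vec_eq_iff E_def B_def A_def padm_def row_def axis_def)
  have detA: "det A = d * det B"
    using d1[unfolded rowk] d2 d3 d4 by simp
  define z where "z = axis k 1 - v"
  have znz: "z \<noteq> 0"
  proof
    assume "z = 0"
    then have "z$k = 0" by simp
    then show False using vout[OF kS] by (simp add: z_def axis_def)
  qed
  have Mz: "(M *v z)$i = M$i$k - (\<Sum>l\<in>S. M$i$l * v$l)" for i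
  proof -
    have "(M *v axis k 1)$i = M$i$k"
      by (simp add: matrix_vector_mult_def axis_def if_distrib[where f="\<lambda>c. _ * c"] cong: if_cong)
    then show ?thesis using Mv[of i] by (simp add: z_def matrix_vector_mult_diff_distrib)
  qed
  have zi: "z$i * (M *v z)$i = (if i = k then (M *v z)$k else 0)" for i
  proof (cases "i = k")
    case True then show ?thesis using vout[OF kS] by (simp add: z_def axis_def)
  next
    case ik: False
    show ?thesis
    proof (cases "i \<in> S")
      case True then show ?thesis using ik Mz[of i] vin[OF True] by simp
    next
      case iS: False then show ?thesis using ik vout[OF iS] by (simp add: z_def axis_def)
    qed
  qed
  have "z \<bullet> (M *v z) = (\<Sum>i\<in>UNIV. if i = k then (M *v z)$k else 0)"
    unfolding inner_vec_def using zi by simp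
  also have "\<dots> = d" using Mz[of k] by (simp add: d_def sym mult.commute)
  finally have dpos: "d > 0" using pd znz unfolding pdm_def by metis
  have "(\<Sum>j\<in>S. v$j * M$j$k) = (\<Sum>j\<in>S. v$j * (M *v v)$j)"
    by (intro sum.cong refl) (simp add: Mv vin)
  also have "\<dots> = (\<Sum>j\<in>UNIV. v$j * (M *v v)$j)"
    by (rule sum.mono_neutral_left) (auto simp: vout)
  also have "\<dots> = v \<bullet> (M *v v)" by (simp add: inner_vec_def)
  finally have "(\<Sum>j\<in>S. v$j * M$j$k) \<ge> 0" using pdm_nonneg[OF pd] by simp
  then have "d \<le> M$k$k" by (simp add: d_def)
  then show ?thesis using dpos detA by (auto simp: A_def B_def)
qed

lemma hadamard:
  fixes M :: "real^'n::finite^'n"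
  assumes sym: "\<And>i j. M$i$j = M$j$i" and pd: "pdm M"
  shows "0 < det M \<and> det M \<le> (\<Prod>i\<in>UNIV. M$i$i)"
proof -
  have "0 < det (padm M S) \<and> det (padm M S) \<le> (\<Prod>i\<in>S. M$i$i)" for S
  proof -
    have "finite S" by simp
    then show ?thesis
    proof (induction S rule: finite_induct)
      case empty
      have "padm M {} = mat 1" by (simp add: padm_def vec_eq_iff mat_def)
      then show ?case by simp
    next
      case (insert k S)
      obtain d where d: "0 < d" "d \<le> M$k$k" "det (padm M (insert k S)) = d * det (padm M S)"
        using had_step[OF sym pd insert(2)] by blast
      have "d * det (padm M S) \<le> M$k$k * (\<Prod>i\<in>S. M$i$i)"
        using d insert(3) by (intro mult_mono) auto
      then show ?case using d insert by simp
    qed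
  qed
  moreover have "padm M UNIV = M" by (simp add: padm_def vec_eq_iff)
  ultimately show ?thesis by metis
qed

lemma diag_mult_entry: "(diag_mat lam ** C)$i$j = lam$i * C$i$j"
  by (simp add: matrix_matrix_mult_def diag_mat_def if_distrib[where f="\<lambda>c. c * _"] cong: if_cong)

lemma eig_main:
  fixes lam lamhat :: "real^'n::finite" and C :: "real^'n^'n" and s u :: real
  assumes lam_pos: "\<forall>i. lam$i > 0"
    and C_sym: "transpose C = C"
    and C_pd: "\<forall>x::real^'n. x \<noteq> 0 \<longrightarrow> x \<bullet> (C *v x) > 0"
    and C_diag: "\<forall>i. C$i$i = 1"
    and eig: "\<forall>t::real. det (t *\<^sub>R mat 1 - diag_mat lam ** C) = (\<Prod>i\<in>UNIV. t - lamhat$i)"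
    and s: "s > 0" and u: "u \<ge> 0"
  shows "0 < (\<Prod>i\<in>UNIV. u + s * lamhat$i) \<and> (\<Prod>i\<in>UNIV. u + s * lamhat$i) \<le> (\<Prod>i\<in>UNIV. u + s * lam$i)"
proof -
  have Csym: "C$i$j = C$j$i" for i j
    using C_sym by (metis transpose_def vec_lambda_beta)
  have lnz: "lam$i \<noteq> 0" for i using lam_pos by (metis less_irrefl)
  define Mu :: "real^'n^'n" where "Mu = (\<chi> i j. (if i = j then u / lam$i else 0) + s * C$i$j)"
  have Msym: "Mu$i$j = Mu$j$i" for i j by (simp add: Mu_def Csym)
  have Mpd: "pdm Mu" unfolding pdm_def
  proof (intro allI impI)
    fix x :: "real^'n" assume x: "x \<noteq> 0"
    have "x \<bullet> (Mu *v x) = (\<Sum>i\<in>UNIV. \<Sum>j\<in>UNIV. (if i = j then x$i * (u / lam$i) * x$j else 0))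
        + s * (\<Sum>i\<in>UNIV. \<Sum>j\<in>UNIV. x$i * C$i$j * x$j)"
    proof -
      have "x$i * Mu$i$j * x$j = (if i = j then x$i * (u / lam$i) * x$j else 0) + s * (x$i * C$i$j * x$j)" for i j
        by (simp add: Mu_def algebra_simps)
      then show ?thesis unfolding quad_eq[of x] by (simp add: sum.distrib sum_distrib_left)
    qed
    also have "(\<Sum>i\<in>UNIV. \<Sum>j\<in>UNIV. (if i = j then x$i * (u / lam$i) * x$j else 0)) =
        (\<Sum>i\<in>UNIV. x$i * (u / lam$i) * x$i)" by simp
    also have "(\<Sum>i\<in>UNIV. \<Sum>j\<in>UNIV. x$i * C$i$j * x$j) = x \<bullet> (C *v x)" by (simp add: quad_eq)
    finally have eq: "x \<bullet> (Mu *v x) = (\<Sum>i\<in>UNIV. x$i * (u / lam$i) * x$i) + s * (x \<bullet> (C *v x))" .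
    have "(\<Sum>i\<in>UNIV. x$i * (u / lam$i) * x$i) \<ge> 0"
    proof (intro sum_nonneg)
      fix i
      have "x$i * (u / lam$i) * x$i = (x$i)^2 * (u / lam$i)" by (simp add: power2_eq_square)
      also have "\<dots> \<ge> 0" using u lam_pos[rule_format, of i] by (intro mult_nonneg_nonneg) auto
      finally show "x$i * (u / lam$i) * x$i \<ge> 0" .
    qed
    moreover have "s * (x \<bullet> (C *v x)) > 0" using s C_pd x by simp
    ultimately show "x \<bullet> (Mu *v x) > 0" using eq by linarith
  qed
  from hadamard[OF Msym Mpd] have H: "0 < det Mu" "det Mu \<le> (\<Prod>i\<in>UNIV. Mu$i$i)" by auto
  have detD: "det (diag_mat lam) = (\<Prod>i\<in>UNIV. lam$i)"
    by (subst det_diagonal) (auto simp: diag_mat_def)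
  have Dpos: "(\<Prod>i\<in>UNIV. lam$i) > 0" using lam_pos by (intro prod_pos) auto
  define t where "t = - u / s"
  define T where "T = t *\<^sub>R mat 1 - diag_mat lam ** C"
  have DM: "diag_mat lam ** Mu = (\<chi> i. (- s) *s (T $ i))"
  proof -
    have "(diag_mat lam ** Mu)$i$j = lam$i * Mu$i$j" for i j
      by (simp add: matrix_matrix_mult_def diag_mat_def if_distrib[where f="\<lambda>c. c * _"] cong: if_cong)
    then show ?thesis
      using s lnz
      by (auto simp: vec_eq_iff Mu_def T_def t_def mat_def diag_mult_entry field_simps)
  qed
  have "det (diag_mat lam ** Mu) = (\<Prod>i\<in>(UNIV::'n set). - s) * det (\<chi> i. T$i)"
    unfolding DM by (rule det_rows_mul)
  also have "(\<chi> i. T$i) = T" by simp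
  also have "det T = (\<Prod>i\<in>UNIV. t - lamhat$i)" using eig by (simp add: T_def)
  also have "(\<Prod>i\<in>(UNIV::'n set). - s) * (\<Prod>i\<in>UNIV. t - lamhat$i) = (\<Prod>i\<in>UNIV. u + s * lamhat$i)"
  proof -
    have "(\<Prod>i\<in>(UNIV::'n set). - s) * (\<Prod>i\<in>UNIV. t - lamhat$i) = (\<Prod>i\<in>UNIV. (- s) * (t - lamhat$i))"
      by (simp only: prod.distrib)
    also have "\<dots> = (\<Prod>i\<in>UNIV. u + s * lamhat$i)"
      using s by (intro prod.cong refl) (auto simp: t_def field_simps)
    finally show ?thesis .
  qed
  finally have eq: "(\<Prod>i\<in>UNIV. u + s * lamhat$i) = (\<Prod>i\<in>UNIV. lam$i) * det Mu"
    by (simp add: det_mul detD)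
  have "(\<Prod>i\<in>UNIV. lam$i) * det Mu \<le> (\<Prod>i\<in>UNIV. lam$i) * (\<Prod>i\<in>UNIV. Mu$i$i)"
    using H Dpos by (intro mult_left_mono) auto
  also have "\<dots> = (\<Prod>i\<in>UNIV. u + s * lam$i)"
    unfolding prod.distrib[symmetric] using lnz C_diag
    by (intro prod.cong) (auto simp: Mu_def field_simps)
  finally show ?thesis using eq H Dpos by simp
qed

lemma lamhat_pos:
  fixes lam lamhat :: "real^'n::finite" and C :: "real^'n^'n"
  assumes lam_pos: "\<forall>i. lam$i > 0"
    and C_sym: "transpose C = C"
    and C_pd: "\<forall>x::real^'n. x \<noteq> 0 \<longrightarrow> x \<bullet> (C *v x) > 0"
    and C_diag: "\<forall>i. C$i$i = 1"
    and eig: "\<forall>t::real. det (t *\<^sub>R mat 1 - diag_mat lam ** C) = (\<Prod>i\<in>UNIV. t - lamhat$i)"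
  shows "lamhat$j > 0"
proof (rule ccontr)
  assume "\<not> lamhat$j > 0"
  then have u: "- lamhat$j \<ge> 0" by simp
  from eig_main[OF assms, of 1 "- lamhat$j"] u
  have "0 < (\<Prod>i\<in>UNIV. - lamhat$j + 1 * lamhat$i)" by auto
  moreover have "(\<Prod>i\<in>UNIV. - lamhat$j + 1 * lamhat$i) = 0"
    by (rule prod_zero) auto
  ultimately show False by linarith
qed



lemma beta_moment:
  fixes a c :: real
  assumes a: "a > 0" and ca: "c > a"
  shows "((\<lambda>t. t powr (a - 1) * (1 - t) powr (c - a - 1) * t ^ n) has_integral
           inverse (Gamma c / (Gamma a * Gamma (c - a))) * (pochhammer a n / pochhammer c n)) {0..1}"
proof -
  have B: "((\<lambda>t. t powr ((a + real n) - 1) * (1 - t) powr ((c - a) - 1)) has_integral Beta (a + real n) (c - a)) {0..1}"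
    using a ca by (intro has_integral_Beta_real) auto
  have eq: "t powr ((a + real n) - 1) * (1 - t) powr ((c - a) - 1) = t powr (a - 1) * (1 - t) powr (c - a - 1) * t ^ n"
    if "t \<in> {0..1}" for t
  proof (cases "t = 0")
    case True then show ?thesis by simp
  next
    case False
    then have "t > 0" using that by auto
    then have "t powr ((a + real n) - 1) = t powr (a - 1) * t ^ n"
      by (simp add: powr_add[symmetric] powr_realpow[symmetric] algebra_simps)
    then show ?thesis by simp
  qed
  have a0: "a \<notin> \<int>\<^sub>\<le>\<^sub>0" "c \<notin> \<int>\<^sub>\<le>\<^sub>0" "c - a \<notin> \<int>\<^sub>\<le>\<^sub>0" using a ca
    by (auto elim!: nonpos_Ints_cases)
  have Gpos: "Gamma a > 0" "Gamma c > 0" "Gamma (c - a) > 0" "Gamma (a + real n) > 0" "Gamma (c + real n) > 0"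
    using a ca by (auto intro!: Gamma_real_pos)
  have "Beta (a + real n) (c - a) = Gamma (a + real n) * Gamma (c - a) / Gamma (c + real n)"
    by (simp add: Beta_def add.commute)
  also have "\<dots> = inverse (Gamma c / (Gamma a * Gamma (c - a))) * (pochhammer a n / pochhammer c n)"
    using Gpos by (simp add: pochhammer_Gamma[OF a0(1)] pochhammer_Gamma[OF a0(2)] field_simps)
  finally have B': "((\<lambda>t. t powr ((a + real n) - 1) * (1 - t) powr ((c - a) - 1)) has_integral
      inverse (Gamma c / (Gamma a * Gamma (c - a))) * (pochhammer a n / pochhammer c n)) {0..1}"
    using B by simp
  show ?thesis by (rule iffD1[OF has_integral_cong B']) (use eq in auto)
qed

lemma euler_FD:
  fixes a b c :: real and x :: "'n::finite \<Rightarrow> real"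
  assumes a: "a > 0" and ca: "c > a" and b: "b > 0" and x0: "\<And>j. 0 < x j" and x1: "\<And>j. x j < 1"
  shows "(\<lambda>t. t powr (a - 1) * (1 - t) powr (c - a - 1) * (\<Prod>j\<in>UNIV. (1 - x j * t) powr (- b))) integrable_on {0..1} \<and>
     lauricella_FD a (\<lambda>_. b) c x = Gamma c / (Gamma a * Gamma (c - a)) *
     integral {0..1} (\<lambda>t. t powr (a - 1) * (1 - t) powr (c - a - 1) * (\<Prod>j\<in>UNIV. (1 - x j * t) powr (- b)))"
proof -
  define K where "K = Gamma c / (Gamma a * Gamma (c - a))"
  have Kpos: "K > 0" unfolding K_def using a ca by (auto intro!: Gamma_real_pos divide_pos_pos mult_pos_pos)
  define w where "w t = t powr (a - 1) * (1 - t) powr (c - a - 1)" for t :: real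
  define f where "f j k t = pochhammer b k * (x j * t) ^ k / fact k" for j :: 'n and k :: nat and t :: real
  define h where "h t = (\<Prod>j\<in>UNIV. (1 - x j * t) powr (- b))" for t :: real
  define hM where "hM M t = (\<Prod>j\<in>UNIV. \<Sum>k<M. f j k t)" for M :: nat and t :: real
  define coef where "coef i = (\<Prod>j\<in>UNIV. pochhammer b (i j) * x j ^ i j / fact (i j))" for i :: "'n \<Rightarrow> nat"
  define T where "T i = pochhammer a (\<Sum>j\<in>UNIV. i j) / pochhammer c (\<Sum>j\<in>UNIV. i j) * coef i" for i :: "'n \<Rightarrow> nat"
  define Bx where "Bx M = PiE (UNIV :: 'n set) (\<lambda>_. {..<M})" for M :: nat
  have finBx: "finite (Bx M)" for M unfolding Bx_def by (intro finite_PiE) auto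
  have FD: "lauricella_FD a (\<lambda>_. b) c x = infsum T UNIV"
    unfolding lauricella_FD_def by (intro infsum_cong) (simp add: T_def coef_def)
  have prodf: "(\<Prod>j\<in>UNIV. f j (i j) t) = coef i * t ^ (\<Sum>j\<in>UNIV. i j)" for i t
  proof -
    have "(\<Prod>j\<in>UNIV. f j (i j) t) = (\<Prod>j\<in>UNIV. (pochhammer b (i j) * x j ^ i j / fact (i j)) * t ^ i j)"
      by (intro prod.cong refl) (simp add: f_def power_mult_distrib)
    also have "\<dots> = coef i * (\<Prod>j\<in>UNIV. t ^ i j)" unfolding coef_def by (rule prod.distrib)
    also have "(\<Prod>j\<in>UNIV. t ^ i j) = t ^ (\<Sum>j\<in>UNIV. i j)" by (simp add: power_sum)
    finally show ?thesis .
  qed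
  have boxsum: "hM M t = (\<Sum>i\<in>Bx M. coef i * t ^ (\<Sum>j\<in>UNIV. i j))" for M t
    unfolding hM_def Bx_def by (subst prod_sum_PiE) (auto simp: prodf)
  have gM_int: "((\<lambda>t. w t * hM M t) has_integral (\<Sum>i\<in>Bx M. T i / K)) {0..1}" for M
  proof -
    have eq: "w t * hM M t = (\<Sum>i\<in>Bx M. coef i * (w t * t ^ (\<Sum>j\<in>UNIV. i j)))" for t
      by (simp add: boxsum sum_distrib_left mult_ac)
    have "((\<lambda>t. \<Sum>i\<in>Bx M. coef i * (w t * t ^ (\<Sum>j\<in>UNIV. i j))) has_integral
            (\<Sum>i\<in>Bx M. coef i * (inverse K * (pochhammer a (\<Sum>j\<in>UNIV. i j) / pochhammer c (\<Sum>j\<in>UNIV. i j))))) {0..1}"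
      by (intro has_integral_sum finBx has_integral_mult_right)
         (use beta_moment[OF a ca] in \<open>simp add: w_def K_def\<close>)
    moreover have "(\<Sum>i\<in>Bx M. coef i * (inverse K * (pochhammer a (\<Sum>j\<in>UNIV. i j) / pochhammer c (\<Sum>j\<in>UNIV. i j))))
        = (\<Sum>i\<in>Bx M. T i / K)"
      by (intro sum.cong refl) (simp add: T_def field_simps)
    ultimately show ?thesis by (simp add: eq)
  qed
  have fnn: "f j k t \<ge> 0" if "t \<ge> 0" for j k t
    using that b x0[of j] by (auto simp: f_def intro!: divide_nonneg_pos mult_nonneg_nonneg pochhammer_nonneg)
  have sums: "(\<lambda>k. f j k t) sums ((1 - x j * t) powr (- b))" if "t \<in> {0..1}" for j t
  proof -
    have z: "\<bar>- (x j * t)\<bar> < 1" using that x0[of j] x1[of j]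
      by (auto simp: abs_mult intro: le_less_trans[OF mult_left_le[of t "x j"]])
    from gen_binomial_real[OF z, of "- b"]
    have "(\<lambda>n. ((- b) gchoose n) * (- (x j * t)) ^ n) sums (1 + - (x j * t)) powr (- b)" .
    moreover have "((- b) gchoose n) * (- (x j * t)) ^ n = f j n t" for n
    proof -
      have "((- b) gchoose n) * (- (x j * t)) ^ n = ((-1) ^ n * (-1) ^ n) * (pochhammer b n * (x j * t) ^ n / fact n)"
        by (simp add: gbinomial_pochhammer power_minus[of "x j * t"])
      also have "(-1::real) ^ n * (-1) ^ n = 1" by (simp add: power_mult_distrib[symmetric])
      finally show ?thesis by (simp add: f_def)
    qed
    ultimately show ?thesis by simp
  qed
  have hM_le: "hM M t \<le> h t" if "t \<in> {0..1}" for M t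
    unfolding hM_def h_def
  proof (intro prod_mono conjI)
    fix j
    show "0 \<le> (\<Sum>k<M. f j k t)" using that fnn by (intro sum_nonneg) auto
    show "(\<Sum>k<M. f j k t) \<le> (1 - x j * t) powr (- b)"
      using sums[OF that, of j] that fnn by (metis sums_unique sums_summable sum_le_suminf finite_lessThan atLeastAtMost_iff)
  qed
  have hM_mono: "hM M t \<le> hM (Suc M) t" if "t \<in> {0..1}" for M t
    unfolding hM_def
    by (intro prod_mono conjI sum_nonneg sum_mono2) (use that fnn in auto)
  have hM_lim: "(\<lambda>M. hM M t) \<longlonglongrightarrow> h t" if "t \<in> {0..1}" for t
    unfolding hM_def h_def
    by (intro tendsto_prod) (use sums[OF that] in \<open>simp add: sums_def\<close>)
  define H where "H = (\<Prod>j\<in>UNIV. (1 - x j) powr (- b))"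
  have h_le: "h t \<le> H" if "t \<in> {0..1}" for t
    unfolding h_def H_def
  proof (intro prod_mono conjI)
    fix j
    show "0 \<le> (1 - x j * t) powr (- b)" by simp
    have "x j * t \<le> x j" using that x0[of j] by (auto intro: mult_left_le)
    then show "(1 - x j * t) powr (- b) \<le> (1 - x j) powr (- b)"
      using b x1[of j] by (intro powr_mono2') auto
  qed
  have w_int: "(w has_integral inverse K) {0..1}"
    using beta_moment[OF a ca, of 0] by (simp add: w_def[abs_def] K_def)
  have wnn: "w t \<ge> 0" for t by (simp add: w_def)
  have hMnn: "hM M t \<ge> 0" if "t \<ge> 0" for M t
    unfolding hM_def using that fnn by (intro prod_nonneg sum_nonneg) auto
  have gM_bound: "integral {0..1} (\<lambda>t. w t * hM M t) \<le> H * inverse K" for M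
  proof -
    have "integral {0..1} (\<lambda>t. w t * hM M t) \<le> integral {0..1} (\<lambda>t. H * w t)"
    proof (rule integral_le)
      show "(\<lambda>t. w t * hM M t) integrable_on {0..1}" using gM_int by blast
      show "(\<lambda>t. H * w t) integrable_on {0..1}" using has_integral_mult_right[OF w_int, of H] by blast
      fix t :: real assume t: "t \<in> {0..1}"
      show "w t * hM M t \<le> H * w t"
        using mult_left_mono[OF order_trans[OF hM_le[OF t] h_le[OF t]] wnn[of t]] by (simp add: mult.commute)
    qed
    also have "\<dots> = H * inverse K" by (rule integral_unique[OF has_integral_mult_right[OF w_int]])
    finally show ?thesis .
  qed
  have MCT: "(\<lambda>t. w t * h t) integrable_on {0..1} \<and>
      ((\<lambda>M. integral {0..1} (\<lambda>t. w t * hM M t)) \<longlonglongrightarrow> integral {0..1} (\<lambda>t. w t * h t))"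
  proof (rule monotone_convergence_increasing)
    show "(\<lambda>t. w t * hM M t) integrable_on {0..1}" for M using gM_int by blast
    show "w t * hM M t \<le> w t * hM (Suc M) t" if "t \<in> {0..1}" for M t
      using hM_mono[OF that] wnn by (intro mult_left_mono) auto
    show "(\<lambda>M. w t * hM M t) \<longlonglongrightarrow> w t * h t" if "t \<in> {0..1}" for t
      using hM_lim[OF that] by (intro tendsto_mult tendsto_const)
    have "integral {0..1} (\<lambda>t. w t * hM M t) \<ge> 0" for M
    proof (rule integral_nonneg)
      show "(\<lambda>t. w t * hM M t) integrable_on {0..1}" using gM_int by blast
      fix t :: real assume "t \<in> {0..1}"
      then show "0 \<le> w t * hM M t" using wnn hMnn by (intro mult_nonneg_nonneg) auto
    qed
    then show "bounded (range (\<lambda>M. integral {0..1} (\<lambda>t. w t * hM M t)))"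
      using gM_bound unfolding bounded_real by (auto intro!: exI[of _ "H * inverse K"])
  qed
  define I where "I = integral {0..1} (\<lambda>t. w t * h t)"
  have gM_le_I: "integral {0..1} (\<lambda>t. w t * hM M t) \<le> I" for M
    unfolding I_def
  proof (rule integral_le)
    show "(\<lambda>t. w t * hM M t) integrable_on {0..1}" using gM_int by blast
    show "(\<lambda>t. w t * h t) integrable_on {0..1}" using MCT by blast
    fix t :: real assume t: "t \<in> {0..1}"
    show "w t * hM M t \<le> w t * h t" using hM_le[OF t] wnn by (intro mult_left_mono) auto
  qed
  have boxT: "(\<Sum>i\<in>Bx M. T i) = K * integral {0..1} (\<lambda>t. w t * hM M t)" for M
    using integral_unique[OF gM_int[of M]] Kpos by (simp add: sum_divide_distrib[symmetric])
  have Tnn: "T i \<ge> 0" for i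
  proof -
    have xp: "0 \<le> x j ^ n" for j n using x0[of j] by simp
    have "coef i \<ge> 0" unfolding coef_def using b
      by (intro prod_nonneg divide_nonneg_pos mult_nonneg_nonneg pochhammer_nonneg xp) auto
    moreover have "pochhammer a (\<Sum>j\<in>UNIV. i j) > 0" "pochhammer c (\<Sum>j\<in>UNIV. i j) > 0"
      using a ca by (auto intro!: pochhammer_pos)
    ultimately show ?thesis unfolding T_def by simp
  qed
  have inbox: "\<exists>M. F \<subseteq> Bx M" if "finite F" for F
  proof -
    define M where "M = Suc (Max ((\<lambda>(i, j). i j) ` (F \<times> UNIV)))"
    have "i j < M" if "i \<in> F" for i j
    proof -
      have "i j \<le> Max ((\<lambda>(i, j). i j) ` (F \<times> UNIV))"
        using \<open>finite F\<close> that by (intro Max_ge) auto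
      then show ?thesis by (simp add: M_def)
    qed
    then show ?thesis by (auto simp: Bx_def PiE_def extensional_def intro!: exI[of _ M])
  qed
  have Fbound: "sum T F \<le> K * I" if fin: "finite F" for F
  proof -
    obtain M where M: "F \<subseteq> Bx M" using inbox[OF fin] by blast
    have "sum T F \<le> sum T (Bx M)" using M finBx Tnn by (intro sum_mono2) auto
    also have "\<dots> \<le> K * I" unfolding boxT using gM_le_I Kpos by (intro mult_left_mono) auto
    finally show ?thesis .
  qed
  have hs: "(T has_sum (SUP X\<in>{X. X \<subseteq> UNIV \<and> finite X}. sum T X)) UNIV"
    by (rule nonneg_bounded_partial_sums_imp_has_sum_SUP) (use Tnn Fbound in auto)
  have bdd: "bdd_above (sum T ` {X. X \<subseteq> UNIV \<and> finite X})"
    using Fbound by (intro bdd_aboveI[where M="K * I"]) auto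
  have S_le: "(SUP X\<in>{X. X \<subseteq> UNIV \<and> finite X}. sum T X) \<le> K * I"
    by (rule cSUP_least) (auto intro: Fbound)
  have S_ge: "K * I \<le> (SUP X\<in>{X. X \<subseteq> UNIV \<and> finite X}. sum T X)"
  proof (rule LIMSEQ_le_const2)
    show "(\<lambda>M. K * integral {0..1} (\<lambda>t. w t * hM M t)) \<longlonglongrightarrow> K * I"
      unfolding I_def using MCT by (intro tendsto_mult tendsto_const) auto
    show "\<exists>N. \<forall>M\<ge>N. K * integral {0..1} (\<lambda>t. w t * hM M t) \<le> (SUP X\<in>{X. X \<subseteq> UNIV \<and> finite X}. sum T X)"
    proof -
      have "sum T (Bx M) \<le> (SUP X\<in>{X. X \<subseteq> UNIV \<and> finite X}. sum T X)" for M
        by (rule cSUP_upper[OF _ bdd]) (use finBx in auto)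
      then show ?thesis unfolding boxT[symmetric] by blast
    qed
  qed
  have "infsum T UNIV = K * I" using infsumI[OF hs] S_le S_ge by simp
  moreover have "(\<lambda>t. w t * h t) = (\<lambda>t. t powr (a - 1) * (1 - t) powr (c - a - 1) * (\<Prod>j\<in>UNIV. (1 - x j * t) powr (- b)))"
    by (simp add: w_def h_def)
  ultimately show ?thesis using MCT unfolding FD by (simp add: K_def I_def)
qed



lemma cov_integral:
  fixes mc m k :: real and lam :: "real^'n::finite"
  assumes mc: "mc > 0" and m: "0 < m" "m < 1" and k: "k > 0" and lam: "\<forall>i. lam$i > 0"
  shows "((\<lambda>t. t powr ((1 - m) - 1) * (1 - t) powr ((real CARD('n) * mc + 1) - (1 - m) - 1) *
            (1 / (\<Prod>j\<in>UNIV. 1 - t + k * m * lam$j)) powr mc)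
         has_integral (Gamma m * Gamma (1 - m) * coverage mc m k lam)) {0..1}"
proof -
  define N where "N = real CARD('n)"
  define a where "a = 1 - m"
  define c where "c = N * mc + 1"
  define x where "x j = 1 / (k * m * lam$j + 1)" for j
  have Npos: "N > 0" by (simp add: N_def)
  have lpos: "k * m * lam$j > 0" for j using k m lam by simp
  have x0: "0 < x j" and x1: "x j < 1" for j using lpos[of j] by (auto simp: x_def)
  have a: "a > 0" using m by (simp add: a_def)
  have ca: "c > a" using mult_pos_pos[OF Npos mc] m by (simp add: a_def c_def)
  have cma: "c - a = N * mc + m" by (simp add: a_def c_def)
  from euler_FD[where a=a and b=mc and c=c and x=x, OF a ca mc x0 x1]
  have E: "(\<lambda>t. t powr (a - 1) * (1 - t) powr (c - a - 1) * (\<Prod>j\<in>UNIV. (1 - x j * t) powr (- mc))) integrable_on {0..1}"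
     "lauricella_FD a (\<lambda>_. mc) c x = Gamma c / (Gamma a * Gamma (c - a)) *
     integral {0..1} (\<lambda>t. t powr (a - 1) * (1 - t) powr (c - a - 1) * (\<Prod>j\<in>UNIV. (1 - x j * t) powr (- mc)))"
    by auto
  define I where "I = integral {0..1} (\<lambda>t. t powr (a - 1) * (1 - t) powr (c - a - 1) * (\<Prod>j\<in>UNIV. (1 - x j * t) powr (- mc)))"
  define P where "P = (\<Prod>j\<in>UNIV. x j powr mc)"
  have HI: "((\<lambda>t. P * (t powr (a - 1) * (1 - t) powr (c - a - 1) * (\<Prod>j\<in>UNIV. (1 - x j * t) powr (- mc)))) has_integral P * I) {0..1}"
    unfolding I_def using E(1) by (intro has_integral_mult_right integrable_integral)
  have pt: "P * (t powr (a - 1) * (1 - t) powr (c - a - 1) * (\<Prod>j\<in>UNIV. (1 - x j * t) powr (- mc))) =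
      t powr (a - 1) * (1 - t) powr (c - a - 1) * (1 / (\<Prod>j\<in>UNIV. 1 - t + k * m * lam$j)) powr mc"
    if t: "t \<in> {0..1}" for t
  proof -
    have xj: "x j powr mc * (1 - x j * t) powr (- mc) = (1 / (1 - t + k * m * lam$j)) powr mc" for j
    proof -
      have q: "0 < 1 - x j * t" using x0[of j] x1[of j] t
        by (auto intro: le_less_trans[OF mult_right_le_one_le[of "x j" t]])
      have "x j / (1 - x j * t) = 1 / (1 - t + k * m * lam$j)"
        using lpos[of j] t by (simp add: x_def field_simps)
      moreover have "x j powr mc * (1 - x j * t) powr (- mc) = (x j / (1 - x j * t)) powr mc"
        using x0[of j] q by (simp add: powr_minus powr_divide divide_inverse[symmetric])
      ultimately show ?thesis by simp
    qed
    have "P * (\<Prod>j\<in>UNIV. (1 - x j * t) powr (- mc)) = (\<Prod>j\<in>UNIV. (1 / (1 - t + k * m * lam$j)) powr mc)"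
      unfolding P_def prod.distrib[symmetric] using xj by simp
    also have "\<dots> = (\<Prod>j\<in>UNIV. 1 / (1 - t + k * m * lam$j)) powr mc"
      by (simp add: prod_powr_distrib)
    also have "(\<Prod>j\<in>UNIV. 1 / (1 - t + k * m * lam$j)) = 1 / (\<Prod>j\<in>UNIV. 1 - t + k * m * lam$j)"
      by (simp add: prod_dividef)
    finally show ?thesis by (simp add: mult_ac)
  qed
  have Gpos: "Gamma m > 0" "Gamma a > 0" "Gamma c > 0" "Gamma (c - a) > 0"
    using m a ca by (auto intro!: Gamma_real_pos)
  have cov: "coverage mc m k lam = Gamma (c - a) / (Gamma c * Gamma m) * P * lauricella_FD a (\<lambda>_. mc) c x"
    unfolding coverage_def P_def x_def[abs_def] cma by (simp add: N_def a_def c_def)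
  have "P * I = Gamma m * Gamma (1 - m) * coverage mc m k lam"
    unfolding cov E(2) I_def[symmetric] using Gpos by (simp add: a_def[symmetric] field_simps)
  then show ?thesis
    using iffD1[OF has_integral_cong HI] pt unfolding N_def[symmetric] a_def[symmetric] c_def[symmetric]
    by simp
qed

lemma FD_a0:
  fixes c :: real and x :: "'n::finite \<Rightarrow> real"
  shows "lauricella_FD 0 b c x = 1"
proof -
  have "lauricella_FD 0 b c x = infsum (\<lambda>_. 1::real) {(\<lambda>_. 0) :: 'n \<Rightarrow> nat}"
    unfolding lauricella_FD_def
  proof (rule infsum_cong_neutral)
    fix i :: "'n \<Rightarrow> nat" assume "i \<in> UNIV - {\<lambda>_. 0}"
    then have "i \<noteq> (\<lambda>_. 0)" by simp
    then obtain j where "i j \<noteq> 0" by auto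
    then have "(\<Sum>j\<in>UNIV. i j) \<noteq> 0" using sum_eq_0_iff[of UNIV i] by auto
    then show "pochhammer 0 (\<Sum>j\<in>UNIV. i j) / pochhammer c (\<Sum>j\<in>UNIV. i j) *
         (\<Prod>j\<in>UNIV. pochhammer (b j) (i j) * x j ^ i j / fact (i j)) = 0"
      by (simp add: pochhammer_0_left)
  qed auto
  then show ?thesis by simp
qed

lemma cov_m1:
  fixes mc k :: real and lam :: "real^'n::finite"
  assumes mc: "mc > 0" and k: "k > 0" and lam: "\<forall>i. lam$i > 0"
  shows "coverage mc 1 k lam = (1 / (\<Prod>j\<in>UNIV. 1 + k * lam$j)) powr mc"
proof -
  have G: "Gamma (real CARD('n) * mc + 1) \<noteq> 0"
    using mc by (intro Gamma_real_pos[THEN less_imp_neq, symmetric] add_pos_nonneg mult_nonneg_nonneg) auto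
  have "coverage mc 1 k lam = (\<Prod>j\<in>UNIV. (1 / (k * lam$j + 1)) powr mc)"
    unfolding coverage_def using G by (simp add: FD_a0)
  also have "\<dots> = (\<Prod>j\<in>UNIV. 1 / (k * lam$j + 1)) powr mc" by (simp add: prod_powr_distrib)
  also have "(\<Prod>j\<in>UNIV. 1 / (k * lam$j + 1)) = 1 / (\<Prod>j\<in>UNIV. 1 + k * lam$j)"
    by (simp add: prod_dividef add.commute)
  finally show ?thesis .
qed

theorem theorem6:
  fixes mc m k :: real and lam lamhat :: "real^'n::finite" and C :: "real^'n^'n"
  assumes mc: "mc > 0" and m: "0 < m" "m \<le> 1" and k: "k > 0"
    and lam_pos: "\<forall>i. lam$i > 0"
    and C_sym: "transpose C = C"
    and C_pd: "\<forall>x::real^'n. x \<noteq> 0 \<longrightarrow> x \<bullet> (C *v x) > 0"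
    and C_diag: "\<forall>i. C$i$i = 1"
    and eig: "\<forall>t::real. det (t *\<^sub>R mat 1 - diag_mat lam ** C) = (\<Prod>i\<in>UNIV. t - lamhat$i)"
  shows "coverage mc m k lamhat \<ge> coverage mc m k lam"
proof -
  have lh: "\<forall>i. lamhat$i > 0" using lamhat_pos[OF lam_pos C_sym C_pd C_diag eig] by blast
  have s: "k * m > 0" using k m by simp
  have key: "0 < (\<Prod>i\<in>UNIV. u + k * m * lamhat$i) \<and> (\<Prod>i\<in>UNIV. u + k * m * lamhat$i) \<le> (\<Prod>i\<in>UNIV. u + k * m * lam$i)"
    if "u \<ge> 0" for u
    using eig_main[OF lam_pos C_sym C_pd C_diag eig s that] by simp
  have cmp: "(1 / (\<Prod>j\<in>UNIV. u + k * m * lam$j)) powr mc \<le> (1 / (\<Prod>j\<in>UNIV. u + k * m * lamhat$j)) powr mc"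
    if "u \<ge> 0" for u
    using key[OF that] mc by (intro powr_mono2 divide_left_mono mult_pos_pos) auto
  show ?thesis
  proof (cases "m = 1")
    case True
    have "k * m = k" using True by simp
    then show ?thesis using cmp[of 1] True cov_m1[OF mc k lam_pos] cov_m1[OF mc k lh] by simp
  next
    case False
    then have m1: "m < 1" using m by simp
    note I1 = cov_integral[OF mc m(1) m1 k lam_pos]
    note I2 = cov_integral[OF mc m(1) m1 k lh]
    have "Gamma m * Gamma (1 - m) * coverage mc m k lam \<le> Gamma m * Gamma (1 - m) * coverage mc m k lamhat"
    proof (rule has_integral_le[OF I1 I2])
      fix t :: real assume t: "t \<in> {0..1}"
      have "(1 / (\<Prod>j\<in>UNIV. 1 - t + k * m * lam$j)) powr mc \<le> (1 / (\<Prod>j\<in>UNIV. 1 - t + k * m * lamhat$j)) powr mc"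
        using cmp[of "1 - t"] t by simp
      then show "t powr ((1 - m) - 1) * (1 - t) powr ((real CARD('n) * mc + 1) - (1 - m) - 1) *
            (1 / (\<Prod>j\<in>UNIV. 1 - t + k * m * lam$j)) powr mc \<le>
            t powr ((1 - m) - 1) * (1 - t) powr ((real CARD('n) * mc + 1) - (1 - m) - 1) *
            (1 / (\<Prod>j\<in>UNIV. 1 - t + k * m * lamhat$j)) powr mc"
        by (intro mult_left_mono) auto
    qed
    moreover have "Gamma m * Gamma (1 - m) > 0" using m m1 by (intro mult_pos_pos Gamma_real_pos) auto
    ultimately show ?thesis by (meson mult_le_cancel_left_pos)
  qed
qed

end
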